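(* For $A,x\in\mathbb{R}$ define $E_0(A,x):=1$, $E_1(A,x):=e^{(1-x)A}$ and, for $n\ge2$, \[ E_n(A,x):=\begin{cases} \exp\!\Big(\big[x(E_1+E_3+\cdots+E_{n-1})-\tfrac n2\big]A\Big), & n \text{ even},\\[4pt] \exp\!\Big(\big[\tfrac{n+1}{2}-x(E_0+E_2+\cdots+E_{n-1})\big]A\Big), & n\text{ odd},\end{cases} \] with all $E_j$ evaluated at $(A,x)$. Define $\varphi_1(A,x):=x-1$, $\varphi_n(A,x):=\varphi_{n-1}(A,x)-1+xE_{n-1}(A,x)$ for $n\ge2$, and the polynomial $p_n(A):=\frac{\partial\varphi_n}{\partial x}(A,1)$. Then $p_2\mid p_{2n}$ for all $n\ge1$. In particular, since $p_2(A)=2-A$, $A=2$ is a root of $p_{2n}$ for every $n\ge1$. *)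

theory Defs
  imports "HOL-Analysis.Analysis" "HOL-Computational_Algebra.Polynomial"
begin

function E :: "nat \<Rightarrow> real \<Rightarrow> real \<Rightarrow> real" where
  "E n A x =
     (if n = 0 then 1
      else if n = 1 then exp ((1 - x) * A)
      else if even n then
        exp ((x * (\<Sum>j\<in>{j. j < n \<and> odd j}. E j A x) - real n / 2) * A)
      else
        exp (((real n + 1) / 2 - x * (\<Sum>j\<in>{j. j < n \<and> even j}. E j A x)) * A))"
  by auto
termination
  by (relation "Wellfounded.measure (\<lambda>(n, A, x). n)") auto

declare E.simps [simp del]

text \<open>phi n A x for n \<ge> 1 (phi 0 is left unspecified and never used).\<close>
fun phi :: "nat \<Rightarrow> real \<Rightarrow> real \<Rightarrow> real" where
  "phi (Suc 0) A x = x - 1"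
| "phi (Suc (Suc n)) A x = phi (Suc n) A x - 1 + x * E (Suc n) A x"

definition p :: "nat \<Rightarrow> real \<Rightarrow> real" where
  "p n A = deriv (\<lambda>x. phi n A x) 1"

end

theory Submission
  imports Defs
begin

function dpoly :: "nat \<Rightarrow> real poly" where
  "dpoly n =
     (if n = 0 then 0
      else if n = 1 then [:0, -1:]
      else if even n then
        [:0, 1:] * (of_nat (n div 2) + (\<Sum>j\<in>{j. j < n \<and> odd j}. dpoly j))
      else
        [:0, -1:] * (of_nat ((n + 1) div 2) + (\<Sum>j\<in>{j. j < n \<and> even j}. dpoly j)))"
  by auto
termination
  by (relation "Wellfounded.measure (\<lambda>n. n)") auto

declare dpoly.simps [simp del]

lemma dpoly1: "dpoly (Suc 0) = [:0, -1:]"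
  by (subst dpoly.simps) simp

lemma set_odd_Suc: "{j::nat. j < Suc n \<and> odd j} =
   (if odd n then insert n {j. j < n \<and> odd j} else {j. j < n \<and> odd j})"
  by (auto simp: less_Suc_eq)

lemma set_even_Suc: "{j::nat. j < Suc n \<and> even j} =
   (if even n then insert n {j. j < n \<and> even j} else {j. j < n \<and> even j})"
  by (auto simp: less_Suc_eq)

lemma card_odd: "card {j::nat. j < n \<and> odd j} = n div 2"
proof (induction n)
  case 0 then show ?case by simp
next
  case (Suc n)
  show ?case
  proof (cases "odd n")
    case True
    have "card {j::nat. j < Suc n \<and> odd j} = Suc (card {j. j < n \<and> odd j})"
      unfolding set_odd_Suc using True by simp
    moreover have "Suc n div 2 = Suc (n div 2)" using True by presburger
    ultimately show ?thesis using Suc.IH by simp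
  next
    case False
    have "card {j::nat. j < Suc n \<and> odd j} = card {j. j < n \<and> odd j}"
      unfolding set_odd_Suc using False by simp
    moreover have "Suc n div 2 = n div 2" using False by presburger
    ultimately show ?thesis using Suc.IH by simp
  qed
qed

lemma card_even: "card {j::nat. j < n \<and> even j} = (n + 1) div 2"
proof (induction n)
  case 0 then show ?case by simp
next
  case (Suc n)
  show ?case
  proof (cases "even n")
    case True
    have "card {j::nat. j < Suc n \<and> even j} = Suc (card {j. j < n \<and> even j})"
      unfolding set_even_Suc using True by simp
    moreover have "(Suc n + 1) div 2 = Suc ((n + 1) div 2)" using True by presburger
    ultimately show ?thesis using Suc.IH by simp
  next
    case False
    have "card {j::nat. j < Suc n \<and> even j} = card {j. j < n \<and> even j}"
      unfolding set_even_Suc using False by simp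
    moreover have "(Suc n + 1) div 2 = (n + 1) div 2" using False by presburger
    ultimately show ?thesis using Suc.IH by simp
  qed
qed

lemma sum_odd_Suc: "(\<Sum>j\<in>{j::nat. j < Suc n \<and> odd j}. f j) =
   (\<Sum>j\<in>{j. j < n \<and> odd j}. f j) + (if odd n then f n else 0)"
  unfolding set_odd_Suc by (simp add: add.commute)

lemma sum_even_Suc: "(\<Sum>j\<in>{j::nat. j < Suc n \<and> even j}. f j) =
   (\<Sum>j\<in>{j. j < n \<and> even j}. f j) + (if even n then f n else 0)"
  unfolding set_even_Suc by (simp add: add.commute)

lemma E_deriv:
  "E n A 1 = 1 \<and> ((\<lambda>x. E n A x) has_real_derivative poly (dpoly n) A) (at 1)"
proof (induction n rule: less_induct)
  case (less n)
  show ?case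
  proof (cases "n = 0")
    case True
    then show ?thesis by (simp add: E.simps[of 0] dpoly.simps[of 0])
  next
    case n0: False
    show ?thesis
    proof (cases "n = 1")
      case True
      have e: "(\<lambda>x. E n A x) = (\<lambda>x. exp ((1 - x) * A))"
        unfolding True by (intro ext) (subst E.simps, simp)
      have "((\<lambda>x. exp ((1 - x) * A)) has_real_derivative poly (dpoly n) A) (at 1)"
        using True by (auto intro!: derivative_eq_intros simp: dpoly1)
      then show ?thesis using e True by (simp add: E.simps[of 1])
    next
      case n1: False
      define S where "S = (if even n then {j. j < n \<and> odd j} else {j. j < n \<and> even j})"
      have finS: "finite S" unfolding S_def by auto
      have IH: "\<And>j. j \<in> S \<Longrightarrow> E j A 1 = 1 \<and> ((\<lambda>x. E j A x) has_real_derivative poly (dpoly j) A) (at 1)"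
        using less unfolding S_def by (auto split: if_splits)
      have S1: "(\<Sum>j\<in>S. E j A 1) = real (card S)"
        using IH by simp
      have D: "((\<lambda>x. \<Sum>j\<in>S. E j A x) has_real_derivative (\<Sum>j\<in>S. poly (dpoly j) A)) (at 1)"
        by (rule DERIV_sum) (use IH in auto)
      show ?thesis
      proof (cases "even n")
        case True
        have e: "(\<lambda>x. E n A x) = (\<lambda>x. exp ((x * (\<Sum>j\<in>S. E j A x) - real n / 2) * A))"
          using True n0 n1 unfolding S_def by (simp add: E.simps[of n])
        have "card S = n div 2" using True unfolding S_def by (simp add: card_odd)
        then have cS: "real (card S) = real n / 2"
          using True by (simp add: real_of_nat_div)
        note X = DERIV_fun_exp[OF DERIV_cmult_right[where c=A, OF DERIV_diff[OF DERIV_mult[OF DERIV_ident D] DERIV_const[of "real n / 2"]]]]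
        have "((\<lambda>x. exp ((x * (\<Sum>j\<in>S. E j A x) - real n / 2) * A)) has_real_derivative poly (dpoly n) A) (at 1)"
        proof (rule DERIV_cong[OF X])
          have r: "poly (dpoly n) A = A * (real (n div 2) + (\<Sum>j\<in>S. poly (dpoly j) A))"
            using True n0 n1 unfolding S_def by (subst dpoly.simps) (simp add: poly_sum)
          have h: "real (n div 2) = real n / 2" using True by (simp add: real_of_nat_div)
          have c: "(\<Sum>j\<in>S. E j A 1) = real n / 2" using S1 cS by simp
          show "exp ((1 * (\<Sum>j\<in>S. E j A 1) - real n / 2) * A) * ((1 * (\<Sum>j\<in>S. E j A 1) + (\<Sum>j\<in>S. poly (dpoly j) A) * 1 - 0) * A) = poly (dpoly n) A"
            by (simp only: c h r) (simp add: algebra_simps)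
        qed
        then show ?thesis using e S1 cS by simp
      next
        case False
        have e: "(\<lambda>x. E n A x) = (\<lambda>x. exp (((real n + 1) / 2 - x * (\<Sum>j\<in>S. E j A x)) * A))"
          using False n0 n1 unfolding S_def by (simp add: E.simps[of n])
        have "card S = (n + 1) div 2" using False unfolding S_def by (simp add: card_even)
        moreover have hh: "real ((n + 1) div 2) = (real n + 1) / 2"
        proof -
          have e2: "2 * ((n + 1) div 2) = n + 1" using False by presburger
          have "real (2 * ((n + 1) div 2)) = real (n + 1)" by (simp only: e2)
          then show ?thesis by simp
        qed
        ultimately have cS: "real (card S) = (real n + 1) / 2" by simp
        note X = DERIV_fun_exp[OF DERIV_cmult_right[where c=A, OF DERIV_diff[OF DERIV_const[of "(real n + 1) / 2"] DERIV_mult[OF DERIV_ident D]]]]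
        have "((\<lambda>x. exp (((real n + 1) / 2 - x * (\<Sum>j\<in>S. E j A x)) * A)) has_real_derivative poly (dpoly n) A) (at 1)"
        proof (rule DERIV_cong[OF X])
          have r: "poly (dpoly n) A = - A * (real ((n + 1) div 2) + (\<Sum>j\<in>S. poly (dpoly j) A))"
            using False n0 n1 unfolding S_def by (subst dpoly.simps) (simp add: poly_sum algebra_simps)
          note h = hh
          have c: "(\<Sum>j\<in>S. E j A 1) = (real n + 1) / 2" using S1 cS by simp
          show "exp (((real n + 1) / 2 - 1 * (\<Sum>j\<in>S. E j A 1)) * A) * ((0 - (1 * (\<Sum>j\<in>S. E j A 1) + (\<Sum>j\<in>S. poly (dpoly j) A) * 1)) * A) = poly (dpoly n) A"
            by (simp only: c h r) (simp add: algebra_simps)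
        qed
        then show ?thesis using e S1 cS by simp
      qed
    qed
  qed
qed


definition ppoly :: "nat \<Rightarrow> real poly" where
  "ppoly n = of_nat n + (\<Sum>j<n. dpoly j)"

lemma phi_deriv:
  "((\<lambda>x. phi (Suc m) A x) has_real_derivative poly (ppoly (Suc m)) A) (at 1)"
proof (induction m)
  case 0
  have "dpoly 0 = 0" by (subst dpoly.simps) simp
  then show ?case by (auto intro!: derivative_eq_intros simp: ppoly_def)
next
  case (Suc m)
  have E1: "E (Suc m) A 1 = 1" and D: "((\<lambda>x. E (Suc m) A x) has_real_derivative poly (dpoly (Suc m)) A) (at 1)"
    using E_deriv by auto
  have M: "((\<lambda>x. x * E (Suc m) A x) has_real_derivative 1 + poly (dpoly (Suc m)) A) (at 1)"
    using DERIV_mult[OF DERIV_ident D] E1 by simp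
  have "((\<lambda>x. phi (Suc m) A x - 1 + x * E (Suc m) A x) has_real_derivative
          poly (ppoly (Suc m)) A - 0 + (1 + poly (dpoly (Suc m)) A)) (at 1)"
    by (intro DERIV_add DERIV_diff Suc M DERIV_const)
  moreover have "poly (ppoly (Suc m)) A - 0 + (1 + poly (dpoly (Suc m)) A)
      = poly (ppoly (Suc (Suc m))) A"
    by (simp add: ppoly_def poly_sum)
  ultimately show ?case by simp
qed

lemma p_poly: "n \<ge> 1 \<Longrightarrow> p n A = poly (ppoly n) A"
  using phi_deriv[of "n - 1" A] unfolding p_def
  by (intro DERIV_imp_deriv) simp

definition g :: "nat \<Rightarrow> real" where
  "g j = (if j mod 4 = 1 \<or> j mod 4 = 2 then -2 else 0)"

lemma sum_g_odd: "(\<Sum>j\<in>{j. j < n \<and> odd j}. g j) = -2 * real ((n + 2) div 4)"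
proof (induction n)
  case 0 then show ?case by simp
next
  case (Suc n)
  have "n mod 4 = 0 \<or> n mod 4 = 1 \<or> n mod 4 = 2 \<or> n mod 4 = 3" by presburger
  moreover have "n mod 4 = 1 \<Longrightarrow> (Suc n + 2) div 4 = (n + 2) div 4 + 1" by presburger
  moreover have "n mod 4 \<noteq> 1 \<Longrightarrow> (Suc n + 2) div 4 = (n + 2) div 4" by presburger
  moreover have "n mod 4 = 1 \<Longrightarrow> odd n" by presburger
  moreover have "n mod 4 = 3 \<Longrightarrow> odd n" by presburger
  moreover have "n mod 4 = 0 \<Longrightarrow> even n" by presburger
  moreover have "n mod 4 = 2 \<Longrightarrow> even n" by presburger
  ultimately show ?case using Suc by (auto simp: sum_odd_Suc g_def)
qed

lemma sum_g_even: "(\<Sum>j\<in>{j. j < n \<and> even j}. g j) = -2 * real ((n + 1) div 4)"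
proof (induction n)
  case 0 then show ?case by simp
next
  case (Suc n)
  have "n mod 4 = 0 \<or> n mod 4 = 1 \<or> n mod 4 = 2 \<or> n mod 4 = 3" by presburger
  moreover have "n mod 4 = 2 \<Longrightarrow> (Suc n + 1) div 4 = (n + 1) div 4 + 1" by presburger
  moreover have "n mod 4 \<noteq> 2 \<Longrightarrow> (Suc n + 1) div 4 = (n + 1) div 4" by presburger
  moreover have "n mod 4 = 2 \<Longrightarrow> even n" by presburger
  moreover have "n mod 4 = 0 \<Longrightarrow> even n" by presburger
  moreover have "n mod 4 = 1 \<Longrightarrow> odd n" by presburger
  moreover have "n mod 4 = 3 \<Longrightarrow> odd n" by presburger
  ultimately show ?case using Suc by (auto simp: sum_even_Suc g_def)
qed

lemma sum_g: "(\<Sum>j<n. g j) = -2 * real ((n + 2) div 4 + (n + 1) div 4)"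
proof -
  have "{..<n} = {j. j < n \<and> odd j} \<union> {j. j < n \<and> even j}" by auto
  then have "(\<Sum>j<n. g j) = (\<Sum>j\<in>{j. j < n \<and> odd j}. g j) + (\<Sum>j\<in>{j. j < n \<and> even j}. g j)"
    by (simp add: sum.union_disjoint disjoint_iff)
  then show ?thesis by (simp add: sum_g_odd sum_g_even algebra_simps)
qed

lemma dpoly_at2: "poly (dpoly n) 2 = g n"
proof (induction n rule: less_induct)
  case (less n)
  have so: "(\<Sum>j\<in>{j. j < n \<and> odd j}. poly (dpoly j) 2) = -2 * real ((n + 2) div 4)"
    using less by (subst sum_g_odd[symmetric]) (rule sum.cong, auto)
  have se: "(\<Sum>j\<in>{j. j < n \<and> even j}. poly (dpoly j) 2) = -2 * real ((n + 1) div 4)"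
    using less by (subst sum_g_even[symmetric]) (rule sum.cong, auto)
  have m4: "n mod 4 = 0 \<or> n mod 4 = 1 \<or> n mod 4 = 2 \<or> n mod 4 = 3" by presburger
  show ?case
  proof (cases "n = 0")
    case True then show ?thesis by (subst dpoly.simps) (simp add: g_def)
  next
    case n0: False
    show ?thesis
    proof (cases "n = 1")
      case True then show ?thesis by (subst dpoly.simps) (simp add: g_def)
    next
      case n1: False
      show ?thesis
      proof (cases "even n")
        case True
        have r: "poly (dpoly n) 2 = 2 * (real (n div 2) + -2 * real ((n + 2) div 4))"
          using True n0 n1 so by (subst dpoly.simps) (simp add: poly_sum)
        have "n mod 4 = 0 \<or> n mod 4 = 2" using True m4 by presburger
        then show ?thesis
        proof (elim disjE)
          assume a: "n mod 4 = 0"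
          then have "n div 2 = 2 * ((n + 2) div 4)" by presburger
          then have "real (n div 2) = 2 * real ((n + 2) div 4)" by (metis of_nat_mult of_nat_numeral)
          then show ?thesis using a r by (simp add: g_def)
        next
          assume a: "n mod 4 = 2"
          then have "n div 2 + 1 = 2 * ((n + 2) div 4)" by presburger
          then have "real (n div 2) + 1 = 2 * real ((n + 2) div 4)" by (metis of_nat_1 of_nat_add of_nat_mult of_nat_numeral)
          then show ?thesis using a r by (simp add: g_def)
        qed
      next
        case False
        have r: "poly (dpoly n) 2 = - 2 * (real ((n + 1) div 2) + -2 * real ((n + 1) div 4))"
          using False n0 n1 se by (subst dpoly.simps) (simp add: poly_sum)
        have "n mod 4 = 1 \<or> n mod 4 = 3" using False m4 by presburger
        then show ?thesis
        proof (elim disjE)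
          assume a: "n mod 4 = 1"
          then have "(n + 1) div 2 = 2 * ((n + 1) div 4) + 1" by presburger
          then have "real ((n + 1) div 2) = 2 * real ((n + 1) div 4) + 1" by (metis of_nat_1 of_nat_add of_nat_mult of_nat_numeral)
          then show ?thesis using a r by (simp add: g_def)
        next
          assume a: "n mod 4 = 3"
          then have "(n + 1) div 2 = 2 * ((n + 1) div 4)" by presburger
          then have "real ((n + 1) div 2) = 2 * real ((n + 1) div 4)" by (metis of_nat_mult of_nat_numeral)
          then show ?thesis using a r by (simp add: g_def)
        qed
      qed
    qed
  qed
qed

lemma ppoly_at2: "poly (ppoly (2 * n)) 2 = 0"
proof -
  have "poly (ppoly (2 * n)) 2 = real (2 * n) + (\<Sum>j<2 * n. g j)"
    by (simp add: ppoly_def poly_sum dpoly_at2)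
  also have "(2 * n + 2) div 4 + (2 * n + 1) div 4 = n" by presburger
  then have "(\<Sum>j<2 * n. g j) = -2 * real n" by (simp add: sum_g)
  finally show ?thesis by simp
qed

lemma ppoly2: "ppoly 2 = [:2, -1:]"
proof -
  have "dpoly 0 = 0" by (subst dpoly.simps) simp
  then show ?thesis by (simp add: ppoly_def numeral_2_eq_2 dpoly1 numeral_poly)
qed

theorem lemma4p7:
  fixes n :: nat
  assumes "n \<ge> 1"
  shows "(\<exists>P Q q :: real poly.
            (\<forall>A. p 2 A = poly P A) \<and> (\<forall>A. p (2 * n) A = poly Q A) \<and> Q = P * q)
         \<and> p (2 * n) 2 = 0"
proof
  have "[:- 2, 1:] dvd ppoly (2 * n)" using ppoly_at2 poly_eq_0_iff_dvd by blast
  then obtain r where r: "ppoly (2 * n) = [:- 2, 1:] * r" by (elim dvdE)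
  have "ppoly (2 * n) = ppoly 2 * (- r)" unfolding r ppoly2 by simp
  moreover have "\<forall>A. p 2 A = poly (ppoly 2) A" by (simp add: p_poly)
  moreover have "\<forall>A. p (2 * n) A = poly (ppoly (2 * n)) A" using assms by (simp add: p_poly)
  ultimately show "\<exists>P Q q :: real poly.
            (\<forall>A. p 2 A = poly P A) \<and> (\<forall>A. p (2 * n) A = poly Q A) \<and> Q = P * q" by blast
  show "p (2 * n) 2 = 0" using assms by (simp add: p_poly ppoly_at2)
qed

end
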